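(* For all $x\in\mathbb{C}$ and all integers $n\ge0$, \[ \sum_{k=0}^n x^k\big(L_{2k}+(3x-2)F_{2k+2}\big)=3x^{n+1}F_{2n+2},\qquad \sum_{k=0}^n x^k\big(5F_{2k}+(3x-2)L_{2k+2}\big)=3\big(x^{n+1}L_{2n+2}-2\big), \] \[ \sum_{k=0}^n x^k\big(Q_{2k}+(3x-1)P_{2k+2}\big)=3x^{n+1}P_{2n+2},\qquad \sum_{k=0}^n x^k\big(8P_{2k}+(3x-1)Q_{2k+2}\big)=3\big(x^{n+1}Q_{2n+2}-2\big). \]
   Context: $F_n,L_n$ are the Fibonacci and Lucas numbers ($F_0=0,F_1=1,L_0=2,L_1=1$, $W_n=W_{n-1}+W_{n-2}$). $P_n,Q_n$ are the Pell and Pell–Lucas numbers: $P_0=0$, $P_1=1$, $Q_0=2$, $Q_1=2$, $W_n=2W_{n-1}+W_{n-2}$. *)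

theory Defs
  imports Complex_Main
begin

fun fib :: "nat \<Rightarrow> int" where
  "fib 0 = 0" | "fib (Suc 0) = 1" | "fib (Suc (Suc n)) = fib (Suc n) + fib n"

fun lucas :: "nat \<Rightarrow> int" where
  "lucas 0 = 2" | "lucas (Suc 0) = 1" | "lucas (Suc (Suc n)) = lucas (Suc n) + lucas n"

fun pell :: "nat \<Rightarrow> int" where
  "pell 0 = 0" | "pell (Suc 0) = 1" | "pell (Suc (Suc n)) = 2 * pell (Suc n) + pell n"

fun pell_lucas :: "nat \<Rightarrow> int" where
  "pell_lucas 0 = 2" | "pell_lucas (Suc 0) = 2"
| "pell_lucas (Suc (Suc n)) = 2 * pell_lucas (Suc n) + pell_lucas n"

end

theory Submission
  imports Defs
begin

lemma lucas_fib: "lucas (Suc m) = fib m + fib (Suc (Suc m))"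
  by (induction m rule: fib.induct) auto

lemma ql_pell: "pell_lucas (Suc m) = pell m + pell (Suc (Suc m))"
  by (induction m rule: pell.induct) auto

lemma lucas0: "lucas m = 2 * fib (m+1) - fib m"
  by (cases m) (auto simp: lucas_fib)

lemma ql0: "pell_lucas m = 2 * pell (m+1) - 2 * pell m"
  by (cases m) (auto simp: ql_pell)

lemma i1: "lucas (2*n+2) = 2*fib (2*n+4) - 3*fib (2*n+2)"
  by (simp add: lucas0 eval_nat_numeral)
lemma i2: "5 * fib (2*n+2) = 2*lucas (2*n+4) - 3*lucas (2*n+2)"
  by (simp add: lucas0 eval_nat_numeral)
lemma i3: "pell_lucas (2*n+2) = pell (2*n+4) - 3*pell (2*n+2)"
  by (simp add: ql0 eval_nat_numeral)
lemma i4: "8 * pell (2*n+2) = pell_lucas (2*n+4) - 3*pell_lucas (2*n+2)"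
  by (simp add: ql0 eval_nat_numeral)

lemma c1: "(\<Sum>k=0..n. x ^ k * (of_int (lucas (2*k)) + (3*x - 2) * of_int (fib (2*k+2))))
           = 3 * x ^ (n+1) * (of_int (fib (2*n+2)) :: complex)"
proof (induction n)
  case (Suc n)
  have h: "(of_int (lucas (2*n+2)) :: complex) = 2*of_int (fib (2*n+4)) - 3*of_int (fib (2*n+2))"
    using arg_cong[OF i1[of n], of "of_int :: int \<Rightarrow> complex"] by simp
  have e: "2 * Suc n = 2*n+2" "2 * Suc n + 2 = 2*n+4" "Suc n + 1 = n + 2" "2*n+2+2 = 2*n+4" by auto
  have p: "x^Suc n = x^(n+1)" "x^(n+2) = x * x^(n+1)" by simp_all
  show ?case unfolding sum.atLeast0_atMost_Suc Suc.IH e p h by (simp add: algebra_simps)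
qed simp

lemma c2: "(\<Sum>k=0..n. x ^ k * (5 * of_int (fib (2*k)) + (3*x - 2) * of_int (lucas (2*k+2))))
           = 3 * (x ^ (n+1) * (of_int (lucas (2*n+2)) :: complex) - 2)"
proof (induction n)
  case (Suc n)
  have h: "5 * (of_int (fib (2*n+2)) :: complex) = 2*of_int (lucas (2*n+4)) - 3*of_int (lucas (2*n+2))"
    using arg_cong[OF i2[of n], of "of_int :: int \<Rightarrow> complex"] by simp
  have e: "2 * Suc n = 2*n+2" "2 * Suc n + 2 = 2*n+4" "Suc n + 1 = n + 2" "2*n+2+2 = 2*n+4" by auto
  have p: "x^Suc n = x^(n+1)" "x^(n+2) = x * x^(n+1)" by simp_all
  show ?case unfolding sum.atLeast0_atMost_Suc Suc.IH e p h by (simp add: algebra_simps)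
qed (simp add: eval_nat_numeral)

lemma c3: "(\<Sum>k=0..n. x ^ k * (of_int (pell_lucas (2*k)) + (3*x - 1) * of_int (pell (2*k+2))))
           = 3 * x ^ (n+1) * (of_int (pell (2*n+2)) :: complex)"
proof (induction n)
  case (Suc n)
  have h: "(of_int (pell_lucas (2*n+2)) :: complex) = of_int (pell (2*n+4)) - 3*of_int (pell (2*n+2))"
    using arg_cong[OF i3[of n], of "of_int :: int \<Rightarrow> complex"] by simp
  have e: "2 * Suc n = 2*n+2" "2 * Suc n + 2 = 2*n+4" "Suc n + 1 = n + 2" "2*n+2+2 = 2*n+4" by auto
  have p: "x^Suc n = x^(n+1)" "x^(n+2) = x * x^(n+1)" by simp_all
  show ?case unfolding sum.atLeast0_atMost_Suc Suc.IH e p h by (simp add: algebra_simps)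
qed (simp add: eval_nat_numeral)

lemma c4: "(\<Sum>k=0..n. x ^ k * (8 * of_int (pell (2*k)) + (3*x - 1) * of_int (pell_lucas (2*k+2))))
           = 3 * (x ^ (n+1) * (of_int (pell_lucas (2*n+2)) :: complex) - 2)"
proof (induction n)
  case (Suc n)
  have h: "8 * (of_int (pell (2*n+2)) :: complex) = of_int (pell_lucas (2*n+4)) - 3*of_int (pell_lucas (2*n+2))"
    using arg_cong[OF i4[of n], of "of_int :: int \<Rightarrow> complex"] by simp
  have e: "2 * Suc n = 2*n+2" "2 * Suc n + 2 = 2*n+4" "Suc n + 1 = n + 2" "2*n+2+2 = 2*n+4" by auto
  have p: "x^Suc n = x^(n+1)" "x^(n+2) = x * x^(n+1)" by simp_all
  show ?case unfolding sum.atLeast0_atMost_Suc Suc.IH e p h by (simp add: algebra_simps)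
qed (simp add: eval_nat_numeral)

theorem corollary7:
  fixes x :: complex and n :: nat
  shows "((\<Sum>k=0..n. x ^ k * (of_int (lucas (2*k)) + (3*x - 2) * of_int (fib (2*k+2))))
           = 3 * x ^ (n+1) * of_int (fib (2*n+2))) \<and>
    ((\<Sum>k=0..n. x ^ k * (5 * of_int (fib (2*k)) + (3*x - 2) * of_int (lucas (2*k+2))))
           = 3 * (x ^ (n+1) * of_int (lucas (2*n+2)) - 2)) \<and>
    ((\<Sum>k=0..n. x ^ k * (of_int (pell_lucas (2*k)) + (3*x - 1) * of_int (pell (2*k+2))))
           = 3 * x ^ (n+1) * of_int (pell (2*n+2))) \<and>
    ((\<Sum>k=0..n. x ^ k * (8 * of_int (pell (2*k)) + (3*x - 1) * of_int (pell_lucas (2*k+2))))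
           = 3 * (x ^ (n+1) * of_int (pell_lucas (2*n+2)) - 2))"
  using c1 c2 c3 c4 by blast

end
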